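(* Let $G = K \rtimes_\varphi \langle t\rangle$ be a finitely generated group, where $K$ is abelian, $\langle t\rangle$ is infinite cyclic and $\varphi\in\mathrm{Aut}(K)$. Let $R$ be a finite symmetric subset of $K$ such that $S=R\cup\{t^{\pm1}\}$ generates $G$. Let $f$ be a non-negative real function with $f(r)\to\infty$, and let $U_f(r)$ be the set of elements of $S^r$ that are represented by some word in $W'$ in which the letter $t$ occurs at most $f(r)$ times. Then $|U_f(r)|=r^{O(f(r))}$, i.e. there is a constant $C$ with $|U_f(r)|\le r^{Cf(r)}$ for all sufficiently large $r$.
   Context: $K$ is written additively, $tkt^{-1}=\varphi(k)$. $W(R)$ denotes the set of words in the alphabet $R$. A word in $S$ is a geodesic if its length (after free reduction) equals the word length of the element it represents. $W'$ is the set of geodesic words of the form $t^{-p}u_0\,t\,u_1\,t\cdots u_{d-1}\,t\,u_d\,t^{-q}t^{m}$ with integers $p,q,m\ge0$, $d=p+q$ and $u_0,\dots,u_d\in W(R)$. $S^r$ is the set of elements of word length at most $r$ with respect to $S$. *)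

theory Defs
  imports Complex_Main
begin

text \<open>The group G = K \<rtimes>_phi <t> is modelled on pairs (k, n) :: 'k \<times> int,
  standing for the element k t^n, with K written additively.
  Multiplication: (k1 t^n1)(k2 t^n2) = (k1 + phi^n1(k2)) t^(n1+n2),
  so that t k t^-1 = phi(k).\<close>

definition phipow :: "('k \<Rightarrow> 'k) \<Rightarrow> int \<Rightarrow> 'k \<Rightarrow> 'k" where
  "phipow \<phi> n = (if n \<ge> 0 then \<phi> ^^ nat n else (inv \<phi>) ^^ nat (- n))"

definition is_aut :: "('k::ab_group_add \<Rightarrow> 'k) \<Rightarrow> bool" where
  "is_aut \<phi> \<longleftrightarrow> bij \<phi> \<and> (\<forall>a b. \<phi> (a + b) = \<phi> a + \<phi> b)"

definition sd_mult :: "('k::ab_group_add \<Rightarrow> 'k) \<Rightarrow> 'k \<times> int \<Rightarrow> 'k \<times> int \<Rightarrow> 'k \<times> int" where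
  "sd_mult \<phi> x y = (fst x + phipow \<phi> (snd x) (fst y), snd x + snd y)"

definition sd_one :: "'k::ab_group_add \<times> int" where
  "sd_one = (0, 0)"

definition sd_inv :: "('k::ab_group_add \<Rightarrow> 'k) \<Rightarrow> 'k \<times> int \<Rightarrow> 'k \<times> int" where
  "sd_inv \<phi> x = (- phipow \<phi> (- snd x) (fst x), - snd x)"

inductive_set gen_by :: "('k::ab_group_add \<Rightarrow> 'k) \<Rightarrow> ('k \<times> int) set \<Rightarrow> ('k \<times> int) set"
  for \<phi> A where
  gen_base: "x \<in> A \<Longrightarrow> x \<in> gen_by \<phi> A"
| gen_one: "sd_one \<in> gen_by \<phi> A"
| gen_mult: "x \<in> gen_by \<phi> A \<Longrightarrow> y \<in> gen_by \<phi> A \<Longrightarrow> sd_mult \<phi> x y \<in> gen_by \<phi> A"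
| gen_inv: "x \<in> gen_by \<phi> A \<Longrightarrow> sd_inv \<phi> x \<in> gen_by \<phi> A"

datatype 'k letter = L 'k | T | Ti

fun letter_val :: "'k::ab_group_add letter \<Rightarrow> 'k \<times> int" where
  "letter_val (L k) = (k, 0)"
| "letter_val T = (0, 1)"
| "letter_val Ti = (0, -1)"

definition genset :: "'k::ab_group_add set \<Rightarrow> ('k \<times> int) set" where
  "genset R = (\<lambda>k. (k, 0)) ` R \<union> {(0, 1), (0, -1)}"

fun letter_inv :: "'k::ab_group_add letter \<Rightarrow> 'k letter" where
  "letter_inv (L k) = L (- k)"
| "letter_inv T = Ti"
| "letter_inv Ti = T"

definition words :: "'k set \<Rightarrow> 'k letter list set" where
  "words R = {w. \<forall>a \<in> set w. case a of L k \<Rightarrow> k \<in> R | _ \<Rightarrow> True}"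

definition R_words :: "'k set \<Rightarrow> 'k letter list set" where
  "R_words R = {w. \<forall>a \<in> set w. \<exists>k \<in> R. a = L k}"

fun eval_word :: "('k::ab_group_add \<Rightarrow> 'k) \<Rightarrow> 'k letter list \<Rightarrow> 'k \<times> int" where
  "eval_word \<phi> [] = sd_one"
| "eval_word \<phi> (a # w) = sd_mult \<phi> (letter_val a) (eval_word \<phi> w)"

fun free_reduce :: "'k::ab_group_add letter list \<Rightarrow> 'k letter list" where
  "free_reduce [] = []"
| "free_reduce (a # w) =
     (case free_reduce w of
        [] \<Rightarrow> [a]
      | b # w' \<Rightarrow> (if b = letter_inv a then w' else a # b # w'))"

definition word_length :: "('k::ab_group_add \<Rightarrow> 'k) \<Rightarrow> 'k set \<Rightarrow> 'k \<times> int \<Rightarrow> nat" where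
  "word_length \<phi> R g = (LEAST n. \<exists>w \<in> words R. length w = n \<and> eval_word \<phi> w = g)"

definition ball_S :: "('k::ab_group_add \<Rightarrow> 'k) \<Rightarrow> 'k set \<Rightarrow> nat \<Rightarrow> ('k \<times> int) set" where
  "ball_S \<phi> R r = {g. word_length \<phi> R g \<le> r}"

definition geodesic :: "('k::ab_group_add \<Rightarrow> 'k) \<Rightarrow> 'k set \<Rightarrow> 'k letter list \<Rightarrow> bool" where
  "geodesic \<phi> R w \<longleftrightarrow> w \<in> words R \<and>
     length (free_reduce w) = word_length \<phi> R (eval_word \<phi> w)"

definition W' :: "('k::ab_group_add \<Rightarrow> 'k) \<Rightarrow> 'k set \<Rightarrow> 'k letter list set" where
  "W' \<phi> R = {w. geodesic \<phi> R w \<and>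
     (\<exists>p q m u. (\<forall>i \<le> p + q. u i \<in> R_words R) \<and>
        w = replicate p Ti @ u 0 @ concat (map (\<lambda>i. T # u i) [1..<p + q + 1])
            @ replicate q Ti @ replicate m T)}"

definition count_t :: "'k letter list \<Rightarrow> nat" where
  "count_t w = length (filter (\<lambda>a. a = T) w)"

definition U_f :: "('k::ab_group_add \<Rightarrow> 'k) \<Rightarrow> 'k set \<Rightarrow> (nat \<Rightarrow> real) \<Rightarrow> nat \<Rightarrow> ('k \<times> int) set" where
  "U_f \<phi> R f r = {g \<in> ball_S \<phi> R r.
     \<exists>w \<in> W' \<phi> R. eval_word \<phi> w = g \<and> real (count_t w) \<le> f r}"

end

theory Submission
  imports Defs "HOL-Library.Multiset" "HOL-Library.FuncSet"
begin

fun tm :: "'k letter list \<Rightarrow> (int \<times> 'k) multiset" where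
  "tm [] = {#}"
| "tm (L k # w) = add_mset (0,k) (tm w)"
| "tm (T # w) = image_mset (\<lambda>(e,k). (e+1,k)) (tm w)"
| "tm (Ti # w) = image_mset (\<lambda>(e,k). (e - 1,k)) (tm w)"

definition cT :: "'k letter list \<Rightarrow> nat" where "cT v = length (filter (\<lambda>a. a = T) v)"
definition cTi :: "'k letter list \<Rightarrow> nat" where "cTi v = length (filter (\<lambda>a. a = Ti) v)"

lemma phipow0: "phipow \<phi> 0 = id"
  by (simp add: phipow_def)

lemma phipow_suc:
  assumes "bij \<phi>" shows "phipow \<phi> (e+1) x = \<phi> (phipow \<phi> e x)"
proof -
  consider "e \<ge> 0" | "e = -1" | "e < -1" by linarith
  then show ?thesis
  proof cases
    case 1
    then have "nat (e+1) = Suc (nat e)" by simp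
    then show ?thesis using 1 by (simp add: phipow_def)
  next
    case 2
    then show ?thesis using assms by (simp add: phipow_def bij_is_surj surj_f_inv_f)
  next
    case 3
    then have "nat (-e) = Suc (nat (-(e+1)))" by simp
    then show ?thesis using 3 assms by (simp add: phipow_def bij_is_surj surj_f_inv_f)
  qed
qed

lemma phipow_pred:
  assumes "bij \<phi>" shows "phipow \<phi> (e - 1) x = inv \<phi> (phipow \<phi> e x)"
proof -
  have "phipow \<phi> e x = \<phi> (phipow \<phi> (e - 1) x)" using phipow_suc[OF assms, of "e - 1"] by simp
  then show ?thesis using assms by (simp add: bij_is_inj)
qed

lemma hom_sum_mset:
  fixes g :: "'k::ab_group_add \<Rightarrow> 'k"
  assumes "\<And>a b. g (a + b) = g a + g b"
  shows "g (sum_mset M) = sum_mset (image_mset g M)"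
proof (induction M)
  case empty
  have "g 0 = g 0 + g 0" using assms[of 0 0] by simp
  then show ?case by simp
next
  case (add x M) then show ?case by (simp add: assms)
qed

lemma aut_zero: "is_aut \<phi> \<Longrightarrow> \<phi> 0 = 0"
proof -
  assume "is_aut \<phi>"
  then have "\<phi> 0 = \<phi> 0 + \<phi> 0" unfolding is_aut_def by (metis add.right_neutral)
  then show ?thesis by simp
qed

lemma inv_add:
  assumes "is_aut \<phi>" shows "inv \<phi> (a + b) = inv \<phi> a + inv \<phi> b"
proof -
  have b: "bij \<phi>" and h: "\<And>a b. \<phi> (a + b) = \<phi> a + \<phi> b" using assms by (auto simp: is_aut_def)
  have "\<phi> (inv \<phi> a + inv \<phi> b) = a + b" using h b by (simp add: bij_is_surj surj_f_inv_f)
  then show ?thesis using b by (metis bij_inv_eq_iff)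
qed

lemma eval_fst:
  assumes "is_aut \<phi>"
  shows "fst (eval_word \<phi> v) = sum_mset (image_mset (\<lambda>(e,k). phipow \<phi> e k) (tm v))"
proof (induction v rule: tm.induct)
  case 1 then show ?case by (simp add: sd_one_def)
next
  case (2 k w) then show ?case by (simp add: sd_mult_def phipow0)
next
  case (3 w)
  have b: "bij \<phi>" and h: "\<And>a b. \<phi> (a + b) = \<phi> a + \<phi> b" using assms by (auto simp: is_aut_def)
  have "fst (eval_word \<phi> (T # w)) = \<phi> (fst (eval_word \<phi> w))"
    by (simp add: sd_mult_def phipow_def)
  also have "\<dots> = sum_mset (image_mset \<phi> (image_mset (\<lambda>(e,k). phipow \<phi> e k) (tm w)))"
    using 3 hom_sum_mset[of \<phi>, OF h] by simp
  also have "\<dots> = sum_mset (image_mset (\<lambda>(e,k). phipow \<phi> e k) (tm (T # w)))"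
    by (simp add: image_mset.compositionality comp_def, rule arg_cong[where f=sum_mset], rule image_mset_cong)
       (auto simp: phipow_suc[OF b])
  finally show ?case .
next
  case (4 w)
  have b: "bij \<phi>" using assms by (auto simp: is_aut_def)
  have "fst (eval_word \<phi> (Ti # w)) = inv \<phi> (fst (eval_word \<phi> w))"
    by (simp add: sd_mult_def phipow_def)
  also have "\<dots> = sum_mset (image_mset (inv \<phi>) (image_mset (\<lambda>(e,k). phipow \<phi> e k) (tm w)))"
    using 4 hom_sum_mset[of "inv \<phi>", OF inv_add[OF assms]] by simp
  also have "\<dots> = sum_mset (image_mset (\<lambda>(e,k). phipow \<phi> e k) (tm (Ti # w)))"
    by (simp add: image_mset.compositionality comp_def, rule arg_cong[where f=sum_mset], rule image_mset_cong)
       (auto simp: phipow_pred[OF b])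
  finally show ?case .
qed

lemma eval_snd: "snd (eval_word \<phi> v) = int (cT v) - int (cTi v)"
  by (induction v rule: tm.induct) (auto simp: sd_mult_def sd_one_def cT_def cTi_def)

lemma tm_mem: "(e,k) \<in># tm v \<Longrightarrow> - int (cTi v) \<le> e \<and> e \<le> int (cT v) \<and> L k \<in> set v"
  by (induction v arbitrary: e rule: tm.induct) (fastforce simp: cT_def cTi_def)+

lemma tm_size: "size (tm v) \<le> length v"
  by (induction v rule: tm.induct) auto

lemma fr_filter: "length (filter P (free_reduce w)) \<le> length (filter P w)"
proof (induction w)
  case Nil then show ?case by simp
next
  case (Cons a w)
  show ?case
  proof (cases "free_reduce w")
    case Nil then show ?thesis by simp
  next
    case (Cons b w')
    then show ?thesis using Cons.IH by (auto split: if_splits)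
  qed
qed

lemma fr_set: "set (free_reduce w) \<subseteq> set w"
proof (induction w)
  case Nil then show ?case by simp
next
  case (Cons a w)
  show ?case
  proof (cases "free_reduce w")
    case Nil then show ?thesis by simp
  next
    case (Cons b w')
    then show ?thesis using Cons.IH by (auto split: if_splits)
  qed
qed

lemma cancel_inv:
  assumes "is_aut \<phi>"
  shows "sd_mult \<phi> (letter_val a) (sd_mult \<phi> (letter_val (letter_inv a)) x) = x"
proof -
  have b: "bij \<phi>" using assms by (auto simp: is_aut_def)
  show ?thesis
    by (cases a) (auto simp: sd_mult_def phipow_def b bij_is_surj surj_f_inv_f bij_is_inj prod_eq_iff)
qed

lemma fr_eval:
  assumes "is_aut \<phi>"
  shows "eval_word \<phi> (free_reduce w) = eval_word \<phi> w"
proof (induction w)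
  case Nil then show ?case by simp
next
  case (Cons a w)
  show ?case
  proof (cases "free_reduce w")
    case Nil then show ?thesis using Cons.IH by simp
  next
    case (Cons b w')
    show ?thesis
    proof (cases "b = letter_inv a")
      case True
      have "eval_word \<phi> w = sd_mult \<phi> (letter_val (letter_inv a)) (eval_word \<phi> w')"
        using Cons.IH Cons True by (metis eval_word.simps(2))
      then show ?thesis using Cons True cancel_inv[OF assms] by simp
    next
      case False
      then show ?thesis using Cons Cons.IH by simp
    qed
  qed
qed

lemma concat_counts:
  assumes "\<forall>i \<in> set xs. u i \<in> R_words R"
  shows "length (filter (\<lambda>a. a = T) (concat (map (\<lambda>i. T # u i) xs))) = length xs
       \<and> length (filter (\<lambda>a. a = Ti) (concat (map (\<lambda>i. T # u i) xs))) = 0"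
  using assms
proof (induction xs)
  case Nil then show ?case by simp
next
  case (Cons x xs)
  have "filter (\<lambda>a. a = T) (u x) = []" "filter (\<lambda>a. a = Ti) (u x) = []"
    using Cons.prems by (auto simp: R_words_def filter_empty_conv)
  then show ?case using Cons by simp
qed

lemma W'_counts:
  assumes "w \<in> W' \<phi> R" shows "cTi w \<le> cT w"
proof -
  obtain p q m u where u: "\<forall>i \<le> p + q. u i \<in> R_words R" and
    w: "w = replicate p Ti @ u 0 @ concat (map (\<lambda>i. T # u i) [1..<p + q + 1])
            @ replicate q Ti @ replicate m T"
    using assms unfolding W'_def by blast
  have c: "length (filter (\<lambda>a. a = T) (concat (map (\<lambda>i. T # u i) [1..<p + q + 1]))) = p + q
       \<and> length (filter (\<lambda>a. a = Ti) (concat (map (\<lambda>i. T # u i) [1..<p + q + 1]))) = 0"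
    using concat_counts[of "[1..<p + q + 1]" u R] u by auto
  have "filter (\<lambda>a. a = T) (u 0) = []" "filter (\<lambda>a. a = Ti) (u 0) = []"
    using u by (auto simp: R_words_def filter_empty_conv)
  then show ?thesis using c unfolding w cT_def cTi_def by (simp add: filter_replicate)
qed

lemma card_msets:
  assumes "finite A"
  shows "finite {M. set_mset M \<subseteq> A \<and> size M \<le> r} \<and>
         card {M. set_mset M \<subseteq> A \<and> size M \<le> r} \<le> (r+1) ^ card A"
proof -
  let ?Ms = "{M. set_mset M \<subseteq> A \<and> size M \<le> r}"
  let ?g = "\<lambda>M. restrict (count M) A"
  have inj: "inj_on ?g ?Ms"
  proof (rule inj_onI)
    fix M N assume M: "M \<in> ?Ms" and N: "N \<in> ?Ms" and e: "?g M = ?g N"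
    show "M = N"
    proof (rule multiset_eqI)
      fix x show "count M x = count N x"
      proof (cases "x \<in> A")
        case True then show ?thesis using fun_cong[OF e, of x] by simp
      next
        case False then show ?thesis using M N by (metis count_eq_zero_iff mem_Collect_eq subsetD)
      qed
    qed
  qed
  have sub: "?g ` ?Ms \<subseteq> PiE A (\<lambda>_. {0..r})"
  proof
    fix y assume "y \<in> ?g ` ?Ms"
    then obtain M where M: "M \<in> ?Ms" and y: "y = ?g M" by blast
    have "\<And>x. count M x \<le> r"
    proof -
      fix x have "count M x \<le> size M" by (rule count_le_size)
      then show "count M x \<le> r" using M by simp
    qed
    then show "y \<in> PiE A (\<lambda>_. {0..r})" using y by auto
  qed
  have fin: "finite (PiE A (\<lambda>_. {0..r}))" using assms by (simp add: finite_PiE)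
  have f: "finite ?Ms" using finite_imageD[OF finite_subset[OF sub fin] inj] .
  have "card ?Ms \<le> card (PiE A (\<lambda>_. {0..r}))" using card_inj_on_le[OF inj sub fin] .
  also have "\<dots> = (r+1) ^ card A" using assms by (simp add: card_PiE)
  finally show ?thesis using f by simp
qed

lemma three_pow: "2 * F + 1 \<le> (3::nat) ^ F"
  by (induction F) auto

lemma numeric:
  fixes r F c :: nat
  assumes "r \<ge> 3" "F \<ge> 1"
  shows "(2*F+1) * (r+1) ^ ((2*F+1)*c) \<le> r ^ ((6*c+1)*F)"
proof -
  have "3*r \<le> r*r" using mult_le_mono1[OF assms(1), of r] .
  then have "r+1 \<le> r^2" unfolding power2_eq_square using assms(1) by linarith
  then have "(r+1) ^ ((2*F+1)*c) \<le> (r^2) ^ ((2*F+1)*c)"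
    by (rule power_mono) simp
  also have "\<dots> = r ^ (2*((2*F+1)*c))" by (rule power_mult[symmetric])
  also have "\<dots> \<le> r ^ (6*F*c)"
  proof (rule power_increasing)
    have "(4*F+2)*c \<le> (6*F)*c" by (rule mult_le_mono1) (use assms in auto)
    then show "2*((2*F+1)*c) \<le> 6*F*c" by (simp add: algebra_simps)
  qed (use assms in auto)
  finally have 1: "(r+1) ^ ((2*F+1)*c) \<le> r ^ (6*F*c)" .
  have "2*F+1 \<le> 3^F" by (rule three_pow)
  also have "\<dots> \<le> r ^ F" by (rule power_mono) (use assms in auto)
  finally have 2: "2*F+1 \<le> r^F" .
  have "(2*F+1) * (r+1) ^ ((2*F+1)*c) \<le> r^F * r ^ (6*F*c)" using mult_le_mono[OF 2 1] .
  also have "\<dots> = r ^ ((6*c+1)*F)" by (simp add: power_add[symmetric] algebra_simps)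
  finally show ?thesis .
qed

theorem lemma2p3:
  fixes \<phi> :: "'k::ab_group_add \<Rightarrow> 'k" and R :: "'k set" and f :: "nat \<Rightarrow> real"
  assumes "is_aut \<phi>"
    and "finite R"
    and "\<forall>k \<in> R. - k \<in> R"
    and "gen_by \<phi> (genset R) = UNIV"
    and "\<forall>r. f r \<ge> 0"
    and "filterlim f at_top sequentially"
  shows "\<exists>C::real. \<forall>\<^sub>F r in sequentially.
           real (card (U_f \<phi> R f r)) \<le> real r powr (C * f r)"
proof -
  let ?c = "card R"
  have ev: "\<forall>\<^sub>F r in sequentially. 1 \<le> f r \<and> 3 \<le> r"
    using assms(6) eventually_ge_at_top[of "3::nat"] unfolding filterlim_at_top
    by (auto intro: eventually_conj)
  have "\<forall>\<^sub>F r in sequentially. real (card (U_f \<phi> R f r)) \<le> real r powr (real (6*?c+1) * f r)"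
  proof (rule eventually_mono[OF ev], clarify)
    fix r :: nat assume fr: "1 \<le> f r" and r3: "3 \<le> r"
    define F where "F = nat \<lfloor>f r\<rfloor>"
    have F1: "F \<ge> 1" using fr unfolding F_def by linarith
    have FR: "real F \<le> f r" using fr unfolding F_def by linarith
    define I where "I = {- int F..int F}"
    define A where "A = I \<times> R"
    define Ms where "Ms = {M. set_mset M \<subseteq> A \<and> size M \<le> r}"
    define h where "h = (\<lambda>(M, n). (sum_mset (image_mset (\<lambda>(e,k). phipow \<phi> e k) M), n::int))"
    have finA: "finite A" unfolding A_def I_def using assms(2) by simp
    have cI: "card I = 2*F+1" unfolding I_def by simp
    have cA: "card A = (2*F+1) * ?c" unfolding A_def using cI by (simp add: card_cartesian_product)
    have sub: "U_f \<phi> R f r \<subseteq> h ` (Ms \<times> I)"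
    proof
      fix g assume "g \<in> U_f \<phi> R f r"
      then obtain w where gb: "g \<in> ball_S \<phi> R r" and wW: "w \<in> W' \<phi> R" and ew: "eval_word \<phi> w = g"
        and cw: "real (count_t w) \<le> f r" unfolding U_f_def by blast
      define v where "v = free_reduce w"
      have ev: "eval_word \<phi> v = g" unfolding v_def using fr_eval[OF assms(1)] ew by simp
      have geo: "geodesic \<phi> R w" using wW unfolding W'_def by simp
      have lv: "length v \<le> r" using geo gb ew unfolding v_def geodesic_def ball_S_def by simp
      have wR: "w \<in> words R" using geo unfolding geodesic_def by simp
      have cTw: "cT w \<le> F" using cw unfolding F_def count_t_def cT_def by linarith
      have cTv: "cT v \<le> F" using fr_filter[of "\<lambda>a. a = T" w] cTw unfolding v_def cT_def by simp
      have cTiv: "cTi v \<le> F" using fr_filter[of "\<lambda>a. a = Ti" w] cTw W'_counts[OF wW]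
        unfolding v_def cTi_def by simp
      have "tm v \<in> Ms"
      proof -
        have "set_mset (tm v) \<subseteq> A"
        proof
          fix x assume x: "x \<in> set_mset (tm v)"
          obtain e k where xe: "x = (e,k)" by force
          have "- int (cTi v) \<le> e \<and> e \<le> int (cT v) \<and> L k \<in> set v" using tm_mem[of e k v] x xe by auto
          moreover then have "L k \<in> set w" using fr_set unfolding v_def by blast
          then have "k \<in> R" using wR unfolding words_def by fastforce
          ultimately show "x \<in> A" using xe cTv cTiv unfolding A_def I_def by auto
        qed
        moreover have "size (tm v) \<le> r" using tm_size[of v] lv by simp
        ultimately show ?thesis unfolding Ms_def by simp
      qed
      moreover have "snd g \<in> I" using eval_snd[of \<phi> v] ev cTv cTiv unfolding I_def by auto
      moreover have "g = h (tm v, snd g)"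
        using eval_fst[OF assms(1), of v] ev unfolding h_def by (simp add: prod_eq_iff)
      ultimately show "g \<in> h ` (Ms \<times> I)" by (intro image_eqI[of g h "(tm v, snd g)"]) auto
    qed
    have cm: "finite Ms \<and> card Ms \<le> (r+1) ^ card A" using card_msets[OF finA] unfolding Ms_def .
    have finI: "finite I" unfolding I_def by simp
    have "card (U_f \<phi> R f r) \<le> card (h ` (Ms \<times> I))"
      using card_mono[OF _ sub] cm finI by simp
    also have "\<dots> \<le> card (Ms \<times> I)" by (rule card_image_le) (simp add: cm finI)
    also have "\<dots> = card Ms * card I" by (simp add: card_cartesian_product)
    also have "\<dots> \<le> (r+1) ^ card A * (2*F+1)"
      using mult_le_mono1[of "card Ms" "(r+1)^card A" "card I"] cm cI by simp
    also have "\<dots> = (2*F+1) * (r+1) ^ ((2*F+1) * ?c)" using cA by simp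
    also have "\<dots> \<le> r ^ ((6*?c+1)*F)" using numeric[OF r3 F1] .
    finally have "real (card (U_f \<phi> R f r)) \<le> real r ^ ((6*?c+1)*F)"
      by (metis of_nat_le_iff of_nat_power)
    also have "\<dots> = real r powr real ((6*?c+1)*F)" using r3 by (subst powr_realpow) auto
    also have "\<dots> \<le> real r powr (real (6*?c+1) * f r)"
    proof (rule powr_mono)
      have "real (6*?c+1) * real F \<le> real (6*?c+1) * f r" by (rule mult_left_mono) (use FR in auto)
      then show "real ((6*?c+1)*F) \<le> real (6*?c+1) * f r" by (simp only: of_nat_mult)
    qed (use r3 in auto)
    finally show "real (card (U_f \<phi> R f r)) \<le> real r powr (real (6*?c+1) * f r)" .
  qed
  then show ?thesis by blast
qed

end
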